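(* Let $m,n$ be positive integers and $P\in\Gamma^\pi_{m,n}$. If $m$ is even, then $P$ is an extreme point of $\Gamma^\pi_{m,n}$ if and only if the bipartite graph associated with $P$ is a forest and every row vertex has degree $1$. If $m=2k+1$ is odd, then $P$ is an extreme point of $\Gamma^\pi_{m,n}$ if and only if the bipartite graph associated with $P$ satisfies both: (i) it is a forest; (ii) the middle row vertex $r_{k+1}$ has degree $1$ or $2$, and every other row vertex has degree $1$.
   Context: A real $m\times n$ matrix is stochastic if its entries are nonnegative and each row sums to $1$. $A=(a_{i,j})$ is centrosymmetric if $a_{i,j}=a_{m+1-i,n+1-j}$ for all $i,j$. $\Gamma^\pi_{m,n}$ is the convex set of $m\times n$ centrosymmetric stochastic matrices. The bipartite graph associated with $A\in M_{m,n}$ has vertex classes $\{r_1,\dots,r_m\}$ (row vertices) and $\{s_1,\dots,s_n\}$ (column vertices), with an edge between $r_i$ and $s_j$ if and only if $a_{i,j}\neq 0$. *)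

theory Defs
  imports "HOL-Analysis.Analysis"
begin

text \<open>An m x n real matrix is represented as a function nat => nat => real,
  with rows indexed by 1..m and columns by 1..n; entries outside this range are
  required to be 0, so each matrix has a unique representation.\<close>

definition supported :: "nat \<Rightarrow> nat \<Rightarrow> (nat \<Rightarrow> nat \<Rightarrow> real) \<Rightarrow> bool" where
  "supported m n A \<longleftrightarrow> (\<forall>i j. A i j \<noteq> 0 \<longrightarrow> i \<in> {1..m} \<and> j \<in> {1..n})"

definition stochastic :: "nat \<Rightarrow> nat \<Rightarrow> (nat \<Rightarrow> nat \<Rightarrow> real) \<Rightarrow> bool" where
  "stochastic m n A \<longleftrightarrow> supported m n A
     \<and> (\<forall>i\<in>{1..m}. \<forall>j\<in>{1..n}. 0 \<le> A i j)
     \<and> (\<forall>i\<in>{1..m}. (\<Sum>j=1..n. A i j) = 1)"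

definition centrosymmetric :: "nat \<Rightarrow> nat \<Rightarrow> (nat \<Rightarrow> nat \<Rightarrow> real) \<Rightarrow> bool" where
  "centrosymmetric m n A \<longleftrightarrow>
     (\<forall>i\<in>{1..m}. \<forall>j\<in>{1..n}. A i j = A (m + 1 - i) (n + 1 - j))"

definition Gamma_pi :: "nat \<Rightarrow> nat \<Rightarrow> (nat \<Rightarrow> nat \<Rightarrow> real) set" where
  "Gamma_pi m n = {A. stochastic m n A \<and> centrosymmetric m n A}"

definition extreme_mat :: "(nat \<Rightarrow> nat \<Rightarrow> real) \<Rightarrow> (nat \<Rightarrow> nat \<Rightarrow> real) set \<Rightarrow> bool" where
  "extreme_mat P S \<longleftrightarrow> P \<in> S \<and>
     \<not> (\<exists>A\<in>S. \<exists>B\<in>S. A \<noteq> B \<and>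
          (\<exists>t::real. 0 < t \<and> t < 1 \<and> P = (\<lambda>i j. t * A i j + (1 - t) * B i j)))"

definition bip_adj :: "nat \<Rightarrow> nat \<Rightarrow> (nat \<Rightarrow> nat \<Rightarrow> real) \<Rightarrow> nat + nat \<Rightarrow> nat + nat \<Rightarrow> bool" where
  "bip_adj m n A u v \<longleftrightarrow> (\<exists>i j. i \<in> {1..m} \<and> j \<in> {1..n} \<and> A i j \<noteq> 0 \<and>
      ((u = Inl i \<and> v = Inr j) \<or> (u = Inr j \<and> v = Inl i)))"

definition is_cycle :: "('v \<Rightarrow> 'v \<Rightarrow> bool) \<Rightarrow> 'v list \<Rightarrow> bool" where
  "is_cycle adj vs \<longleftrightarrow> 3 \<le> length vs \<and> distinct vs
     \<and> (\<forall>k. Suc k < length vs \<longrightarrow> adj (vs ! k) (vs ! Suc k))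
     \<and> adj (last vs) (hd vs)"

definition is_forest :: "('v \<Rightarrow> 'v \<Rightarrow> bool) \<Rightarrow> bool" where
  "is_forest adj \<longleftrightarrow> \<not> (\<exists>vs. is_cycle adj vs)"

definition row_degree :: "nat \<Rightarrow> (nat \<Rightarrow> nat \<Rightarrow> real) \<Rightarrow> nat \<Rightarrow> nat" where
  "row_degree n A i = card {j \<in> {1..n}. A i j \<noteq> 0}"

end

theory Submission
  imports Defs
begin

lemma GammaD:
  assumes "X \<in> Gamma_pi m n"
  shows "\<And>i j. X i j \<noteq> 0 \<Longrightarrow> i \<in> {1..m} \<and> j \<in> {1..n}"
    and "\<And>i j. 0 \<le> X i j"
    and "\<And>i. i \<in> {1..m} \<Longrightarrow> (\<Sum>j=1..n. X i j) = 1"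
    and "\<And>i j. i \<in> {1..m} \<Longrightarrow> j \<in> {1..n} \<Longrightarrow> X i j = X (m+1-i) (n+1-j)"
proof -
  show s: "\<And>i j. X i j \<noteq> 0 \<Longrightarrow> i \<in> {1..m} \<and> j \<in> {1..n}"
    using assms unfolding Gamma_pi_def stochastic_def supported_def by blast
  show "\<And>i j. 0 \<le> X i j"
  proof -
    fix i j
    show "0 \<le> X i j"
    proof (cases "X i j = 0")
      case False
      then show ?thesis using s[OF False] assms unfolding Gamma_pi_def stochastic_def by blast
    qed simp
  qed
  show "\<And>i. i \<in> {1..m} \<Longrightarrow> (\<Sum>j=1..n. X i j) = 1"
    using assms unfolding Gamma_pi_def stochastic_def by blast
  show "\<And>i j. i \<in> {1..m} \<Longrightarrow> j \<in> {1..n} \<Longrightarrow> X i j = X (m+1-i) (n+1-j)"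
    using assms unfolding Gamma_pi_def centrosymmetric_def by blast
qed

lemma bip_Inl1:
  "bip_adj m n P (Inl i) v \<Longrightarrow> \<exists>j. v = Inr j \<and> i \<in> {1..m} \<and> j \<in> {1..n} \<and> P i j \<noteq> 0"
  unfolding bip_adj_def by auto

lemma bip_Inl2:
  "bip_adj m n P v (Inl i) \<Longrightarrow> \<exists>j. v = Inr j \<and> i \<in> {1..m} \<and> j \<in> {1..n} \<and> P i j \<noteq> 0"
  unfolding bip_adj_def by auto

lemma bip_Inr1:
  "bip_adj m n P (Inr j) v \<Longrightarrow> \<exists>i. v = Inl i"
  unfolding bip_adj_def by auto

lemma bip_some_Inl:
  "bip_adj m n P u v \<Longrightarrow> (\<exists>i. u = Inl i) \<or> (\<exists>i. v = Inl i)"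
  unfolding bip_adj_def by auto

definition rcond :: "nat \<Rightarrow> nat \<Rightarrow> (nat \<Rightarrow> nat \<Rightarrow> real) \<Rightarrow> bool" where
  "rcond m n P \<longleftrightarrow> (\<forall>i\<in>{1..m}. \<forall>j1\<in>{1..n}. \<forall>j2\<in>{1..n}. P i j1 \<noteq> 0 \<longrightarrow> P i j2 \<noteq> 0
      \<longrightarrow> j1 \<noteq> j2 \<longrightarrow> i = m+1-i \<and> j2 = n+1-j1)"

lemma sum_single:
  assumes "finite S" "a \<in> S" "\<And>j. j \<in> S \<Longrightarrow> j \<noteq> a \<Longrightarrow> f j = 0"
  shows "sum f S = f a"
proof -
  have "sum f S = f a + sum f (S - {a})" using assms by (simp add: sum.remove)
  also have "sum f (S - {a}) = 0" using assms by (intro sum.neutral) auto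
  finally show ?thesis by simp
qed

lemma sum_pair:
  assumes "finite S" "a \<in> S" "b \<in> S" "a \<noteq> b" "\<And>j. j \<in> S \<Longrightarrow> j \<noteq> a \<Longrightarrow> j \<noteq> b \<Longrightarrow> f j = 0"
  shows "sum f S = f a + f b"
proof -
  have "sum f S = f a + sum f (S - {a})" using assms by (simp add: sum.remove)
  also have "sum f (S - {a}) = f b" using assms by (intro sum_single) auto
  finally show ?thesis .
qed

lemma row_nonempty:
  assumes "X \<in> Gamma_pi m n" "i \<in> {1..m}"
  shows "\<exists>j\<in>{1..n}. X i j \<noteq> 0"
proof (rule ccontr)
  assume "\<not> ?thesis"
  then have "(\<Sum>j=1..n. X i j) = 0" by simp
  then show False using GammaD(3)[OF assms(1) assms(2)] by simp
qed

lemma uniq: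
  assumes PG: "P \<in> Gamma_pi m n" and XG: "X \<in> Gamma_pi m n" and rc: "rcond m n P"
    and z: "\<And>i j. P i j = 0 \<Longrightarrow> X i j = 0"
  shows "X = P"
proof (intro ext)
  fix i j
  show "X i j = P i j"
  proof (cases "i \<in> {1..m} \<and> j \<in> {1..n}")
    case False
    then show ?thesis using GammaD(1)[OF PG] GammaD(1)[OF XG] by metis
  next
    case True
    then have i: "i \<in> {1..m}" and jn: "j \<in> {1..n}" by auto
    obtain j0 where j0: "j0 \<in> {1..n}" "P i j0 \<noteq> 0" using row_nonempty[OF PG i] by blast
    show ?thesis
    proof (cases "\<exists>j2\<in>{1..n}. j2 \<noteq> j0 \<and> P i j2 \<noteq> 0")
      case False
      then have P0: "\<And>j. j \<in> {1..n} \<Longrightarrow> j \<noteq> j0 \<Longrightarrow> P i j = 0" by blast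
      then have X0: "\<And>j. j \<in> {1..n} \<Longrightarrow> j \<noteq> j0 \<Longrightarrow> X i j = 0" using z by blast
      have "P i j0 = 1" using GammaD(3)[OF PG i] sum_single[of "{1..n}" j0 "P i"] P0 j0 by simp
      moreover have "X i j0 = 1" using GammaD(3)[OF XG i] sum_single[of "{1..n}" j0 "X i"] X0 j0 by simp
      ultimately show ?thesis using P0 X0 jn by (cases "j = j0") auto
    next
      case True
      then obtain j2 where j2: "j2 \<in> {1..n}" "j2 \<noteq> j0" "P i j2 \<noteq> 0" by blast
      have mid: "i = m+1-i" and j2e: "j2 = n+1-j0" using rc i j0 j2 unfolding rcond_def by metis+
      have P0: "\<And>j. j \<in> {1..n} \<Longrightarrow> j \<noteq> j0 \<Longrightarrow> j \<noteq> j2 \<Longrightarrow> P i j = 0"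
        using rc i j0 j2e unfolding rcond_def by metis
      then have X0: "\<And>j. j \<in> {1..n} \<Longrightarrow> j \<noteq> j0 \<Longrightarrow> j \<noteq> j2 \<Longrightarrow> X i j = 0" using z by blast
      have Ps: "P i j0 + P i j2 = 1" using GammaD(3)[OF PG i] sum_pair[of "{1..n}" j0 j2 "P i"] P0 j0 j2 by simp
      have Xs: "X i j0 + X i j2 = 1" using GammaD(3)[OF XG i] sum_pair[of "{1..n}" j0 j2 "X i"] X0 j0 j2 by simp
      have "P i j0 = P i j2" using GammaD(4)[OF PG i j0(1)] mid j2e by simp
      moreover have "X i j0 = X i j2" using GammaD(4)[OF XG i j0(1)] mid j2e by simp
      ultimately show ?thesis using Ps Xs P0 X0 jn by (cases "j = j0"; cases "j = j2") auto
    qed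
  qed
qed

lemma cond_extreme:
  assumes PG: "P \<in> Gamma_pi m n" and rc: "rcond m n P"
  shows "extreme_mat P (Gamma_pi m n)"
  unfolding extreme_mat_def
proof (intro conjI PG notI)
  assume "\<exists>A\<in>Gamma_pi m n. \<exists>B\<in>Gamma_pi m n. A \<noteq> B \<and>
          (\<exists>t::real. 0 < t \<and> t < 1 \<and> P = (\<lambda>i j. t * A i j + (1 - t) * B i j))"
  then obtain A B t where AG: "A \<in> Gamma_pi m n" and BG: "B \<in> Gamma_pi m n" and ne: "A \<noteq> B"
    and t: "0 < t" "t < 1" and Pe: "P = (\<lambda>i j. t * A i j + (1 - t) * B i j)" by blast
  have zA: "A i j = 0" if "P i j = 0" for i j
  proof -
    have "t * A i j + (1 - t) * B i j = 0" using that Pe by metis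
    moreover have "0 \<le> A i j" "0 \<le> B i j" using GammaD(2)[OF AG] GammaD(2)[OF BG] by auto
    ultimately show ?thesis using t
      by (smt (verit) mult_nonneg_nonneg mult_pos_pos)
  qed
  have zB: "B i j = 0" if "P i j = 0" for i j
  proof -
    have "t * A i j + (1 - t) * B i j = 0" using that Pe by metis
    moreover have "0 \<le> A i j" "0 \<le> B i j" using GammaD(2)[OF AG] GammaD(2)[OF BG] by auto
    ultimately show ?thesis using t
      by (smt (verit) mult_nonneg_nonneg mult_pos_pos)
  qed
  have "A = P" using uniq[OF PG AG rc] zA by blast
  moreover have "B = P" using uniq[OF PG BG rc] zB by blast
  ultimately show False using ne by simp
qed

lemma sum_if_conj:
  assumes "finite S"
  shows "(\<Sum>j\<in>S. if Q \<and> j = a then (e::real) else 0) = (if Q \<and> a \<in> S then e else 0)"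
  using assms by (cases Q) auto

lemma perturb_in:
  fixes s e :: real
  assumes PG: "P \<in> Gamma_pi m n" and i: "i \<in> {1..m}" and j1: "j1 \<in> {1..n}" and j2: "j2 \<in> {1..n}"
    and ne: "j1 \<noteq> j2" and nm: "\<not> (i = m+1-i \<and> j2 = n+1-j1)"
    and e: "0 \<le> e" "2 * e \<le> P i j1" "2 * e \<le> P i j2" and s: "\<bar>s\<bar> \<le> 1"
    and D: "D = (\<lambda>x j. (if x = i \<and> j = j1 then e else 0) + (if x = m+1-i \<and> j = n+1-j1 then e else 0)
               - (if x = i \<and> j = j2 then e else 0) - (if x = m+1-i \<and> j = n+1-j2 then e else 0))"
  shows "(\<lambda>x j. P x j + s * D x j) \<in> Gamma_pi m n"
proof -
  have i': "m+1-i \<in> {1..m}" using i by auto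
  have j1': "n+1-j1 \<in> {1..n}" and j2': "n+1-j2 \<in> {1..n}" using j1 j2 by auto
  have Pc1: "P (m+1-i) (n+1-j1) = P i j1" using GammaD(4)[OF PG i j1] by simp
  have Pc2: "P (m+1-i) (n+1-j2) = P i j2" using GammaD(4)[OF PG i j2] by simp
  have Dsupp: "x \<in> {1..m} \<and> j \<in> {1..n}" if "D x j \<noteq> 0" for x j
    using that i i' j1 j2 j1' j2' unfolding D by (auto split: if_splits)
  have Dbd: "\<bar>D x j\<bar> \<le> 2 * e" for x j
    using ne nm e(1) j1 j2 unfolding D by (auto split: if_splits)
  have DP: "2 * e \<le> P x j" if "D x j \<noteq> 0" for x j
    using that e Pc1 Pc2 unfolding D by (auto split: if_splits)
  have nonneg: "0 \<le> P x j + s * D x j" for x j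
  proof (cases "D x j = 0")
    case True then show ?thesis using GammaD(2)[OF PG] by simp
  next
    case False
    have "\<bar>s * D x j\<bar> \<le> 2 * e" using s Dbd[of x j]
      by (simp add: abs_mult) (metis abs_ge_zero mult_left_le_one_le order_trans)
    then show ?thesis using DP[OF False] by linarith
  qed
  have sup: "supported m n (\<lambda>x j. P x j + s * D x j)"
    unfolding supported_def
  proof (intro allI impI)
    fix x j assume "P x j + s * D x j \<noteq> 0"
    then have "P x j \<noteq> 0 \<or> D x j \<noteq> 0" by auto
    then show "x \<in> {1..m} \<and> j \<in> {1..n}" using GammaD(1)[OF PG] Dsupp by blast
  qed
  have Dsum: "(\<Sum>j=1..n. D x j) = 0" for x
    unfolding D using j1 j2 j1' j2'
    by (simp add: sum.distrib sum_subtractf sum_if_conj)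
  have rows: "(\<Sum>j=1..n. P x j + s * D x j) = 1" if "x \<in> {1..m}" for x
    using GammaD(3)[OF PG that] Dsum[of x] by (simp add: sum.distrib sum_distrib_left[symmetric])
  have Dc: "D x j = D (m+1-x) (n+1-j)" if x: "x \<in> {1..m}" and j: "j \<in> {1..n}" for x j
  proof -
    have a1: "(m+1-x = i) = (x = m+1-i)" "(m+1-x = m+1-i) = (x = i)" using x i by auto
    have a2: "\<And>c. c \<in> {1..n} \<Longrightarrow> (n+1-j = c) = (j = n+1-c)"
       "\<And>c. c \<in> {1..n} \<Longrightarrow> (n+1-j = n+1-c) = (j = c)" using j by auto
    show ?thesis unfolding D using a1 a2[OF j1] a2[OF j2] by simp
  qed
  have cs: "centrosymmetric m n (\<lambda>x j. P x j + s * D x j)"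
    unfolding centrosymmetric_def using GammaD(4)[OF PG] Dc by simp
  show ?thesis unfolding Gamma_pi_def stochastic_def using sup nonneg rows cs by auto
qed

lemma not_extreme:
  assumes PG: "P \<in> Gamma_pi m n" and i: "i \<in> {1..m}" and j1: "j1 \<in> {1..n}" and j2: "j2 \<in> {1..n}"
    and p1: "P i j1 \<noteq> 0" and p2: "P i j2 \<noteq> 0"
    and ne: "j1 \<noteq> j2" and nm: "\<not> (i = m+1-i \<and> j2 = n+1-j1)"
  shows "\<not> extreme_mat P (Gamma_pi m n)"
proof -
  define e where "e = min (P i j1) (P i j2) / 2"
  have "0 < P i j1" "0 < P i j2" using p1 p2 GammaD(2)[OF PG, of i] by (auto simp: less_le)
  then have e: "0 < e" "2 * e \<le> P i j1" "2 * e \<le> P i j2" unfolding e_def by auto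
  define D where "D = (\<lambda>x j. (if x = i \<and> j = j1 then e else 0) + (if x = m+1-i \<and> j = n+1-j1 then e else 0)
               - (if x = i \<and> j = j2 then e else 0) - (if x = m+1-i \<and> j = n+1-j2 then e else 0))"
  define A where "A = (\<lambda>x j. P x j + 1 * D x j)"
  define B where "B = (\<lambda>x j. P x j + (-1) * D x j)"
  have AG: "A \<in> Gamma_pi m n" unfolding A_def
    by (rule perturb_in[OF PG i j1 j2 ne nm _ e(2,3) _ D_def]) (use e in auto)
  have BG: "B \<in> Gamma_pi m n" unfolding B_def
    by (rule perturb_in[OF PG i j1 j2 ne nm _ e(2,3) _ D_def]) (use e in auto)
  have "D i j1 \<noteq> 0"
  proof -
    have "\<not> (i = m+1-i \<and> j1 = n+1-j2)" using nm j1 j2 by auto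
    then have "D i j1 \<ge> e" unfolding D_def using ne e by auto
    then show ?thesis using e by auto
  qed
  then have "A i j1 \<noteq> B i j1" unfolding A_def B_def by simp
  then have "A \<noteq> B" by metis
  moreover have "P = (\<lambda>i j. (1/2) * A i j + (1 - 1/2) * B i j)" unfolding A_def B_def by (intro ext) (simp add: distrib_left diff_divide_distrib)
  moreover have "0 < (1/2::real)" "(1/2::real) < 1" by auto
  ultimately have "\<exists>A\<in>Gamma_pi m n. \<exists>B\<in>Gamma_pi m n. A \<noteq> B \<and>
          (\<exists>t::real. 0 < t \<and> t < 1 \<and> P = (\<lambda>i j. t * A i j + (1 - t) * B i j))"
    using AG BG by blast
  then show ?thesis unfolding extreme_mat_def by blast
qed

lemma extreme_iff_cond:
  assumes PG: "P \<in> Gamma_pi m n"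
  shows "extreme_mat P (Gamma_pi m n) \<longleftrightarrow> rcond m n P"
proof
  assume ex: "extreme_mat P (Gamma_pi m n)"
  show "rcond m n P" unfolding rcond_def
    using not_extreme[OF PG] ex by blast
qed (rule cond_extreme[OF PG])

lemma forest_lemma:
  assumes deg: "\<And>i. i \<in> {1..m} \<Longrightarrow> i \<noteq> c \<Longrightarrow> row_degree n P i \<le> 1"
  shows "is_forest (bip_adj m n P)"
  unfolding is_forest_def
proof
  assume "\<exists>vs. is_cycle (bip_adj m n P) vs"
  then obtain vs where cy: "is_cycle (bip_adj m n P) vs" by blast
  define L where "L = length vs"
  define nx where "nx p = (if Suc p < L then Suc p else 0)" for p
  define pv where "pv p = (if p = 0 then L - 1 else p - 1)" for p
  have L3: "3 \<le> L" and dist: "distinct vs" using cy unfolding is_cycle_def L_def by auto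
  have ne: "vs \<noteq> []" using L3 L_def by auto
  have adj: "bip_adj m n P (vs!p) (vs!(nx p))" if "p < L" for p
  proof (cases "Suc p < L")
    case True
    then show ?thesis using cy unfolding is_cycle_def nx_def L_def by auto
  next
    case False
    then have "p = L - 1" using that by auto
    then have "vs!p = last vs" "vs!(nx p) = hd vs" using ne False
      by (auto simp: nx_def L_def last_conv_nth hd_conv_nth)
    then show ?thesis using cy unfolding is_cycle_def by auto
  qed
  have nxL: "nx p < L" if "p < L" for p using that L3 by (auto simp: nx_def)
  have pvL: "pv p < L" if "p < L" for p using that L3 by (auto simp: pv_def)
  have nxpv: "nx (pv p) = p" if "p < L" for p using that L3 by (auto simp: nx_def pv_def)
  have nxne: "nx p \<noteq> pv p" if "p < L" for p using that L3 by (auto simp: nx_def pv_def)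
  have nxnx: "nx (nx p) \<noteq> p" if "p < L" for p using that L3 by (auto simp: nx_def)
  have rowdeg: "i \<in> {1..m} \<and> 2 \<le> row_degree n P i" if p: "p < L" and vi: "vs!p = Inl i" for p i
  proof -
    obtain j where j: "vs!(nx p) = Inr j" "i \<in> {1..m}" "j \<in> {1..n}" "P i j \<noteq> 0"
      using bip_Inl1[of m n P i] adj[OF p] vi by metis
    have "bip_adj m n P (vs!(pv p)) (vs!p)" using adj[OF pvL[OF p]] nxpv[OF p] by simp
    then obtain j' where j': "vs!(pv p) = Inr j'" "j' \<in> {1..n}" "P i j' \<noteq> 0"
      using bip_Inl2[of m n P _ i] vi by metis
    have "vs!(nx p) \<noteq> vs!(pv p)"
      using nxne[OF p] nxL[OF p] pvL[OF p] dist by (simp add: nth_eq_iff_index_eq L_def)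
    then have "j \<noteq> j'" using j j' by auto
    then have "card {j, j'} = 2" by auto
    moreover have "card {j, j'} \<le> card {j\<in>{1..n}. P i j \<noteq> 0}"
      by (rule card_mono) (use j j' in auto)
    ultimately show ?thesis using j unfolding row_degree_def by auto
  qed
  have nxrow: "\<exists>i'. vs!(nx (nx p)) = Inl i'" if p: "p < L" and vi: "vs!p = Inl i" for p i
  proof -
    obtain j where j: "vs!(nx p) = Inr j"
      using bip_Inl1[of m n P i] adj[OF p] vi by metis
    show ?thesis using bip_Inr1[of m n P j] adj[OF nxL[OF p]] j by metis
  qed
  obtain p i where p: "p < L" and vi: "vs!p = Inl i"
  proof -
    have "bip_adj m n P (vs!0) (vs!(nx 0))" using adj L3 by auto
    then show ?thesis using that L3 nxL[of 0] bip_some_Inl by (metis le_trans less_le_trans not_less_eq_eq numeral_le_one_iff semiring_norm(70) zero_less_Suc)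
  qed
  obtain i' where vi': "vs!(nx (nx p)) = Inl i'" using nxrow[OF p vi] by blast
  have "vs!(nx (nx p)) \<noteq> vs!p"
    using nxnx[OF p] nxL[OF nxL[OF p]] p dist by (simp add: nth_eq_iff_index_eq L_def)
  then have "i \<noteq> i'" using vi vi' by auto
  moreover have "i = c" using rowdeg[OF p vi] deg by fastforce
  moreover have "i' = c" using rowdeg[OF nxL[OF nxL[OF p]] vi'] deg by fastforce
  ultimately show False by simp
qed

lemma deg1_iff:
  assumes PG: "P \<in> Gamma_pi m n" and i: "i \<in> {1..m}"
  shows "(\<forall>j1\<in>{1..n}. \<forall>j2\<in>{1..n}. P i j1 \<noteq> 0 \<longrightarrow> P i j2 \<noteq> 0 \<longrightarrow> j1 = j2)
         \<longleftrightarrow> row_degree n P i = 1"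
proof -
  define S where "S = {j\<in>{1..n}. P i j \<noteq> 0}"
  have Sne: "S \<noteq> {}" using row_nonempty[OF PG i] unfolding S_def by auto
  have "(\<forall>j1\<in>{1..n}. \<forall>j2\<in>{1..n}. P i j1 \<noteq> 0 \<longrightarrow> P i j2 \<noteq> 0 \<longrightarrow> j1 = j2)
        \<longleftrightarrow> (\<forall>a\<in>S. \<forall>b\<in>S. a = b)" unfolding S_def by auto
  also have "\<dots> \<longleftrightarrow> card S = 1"
  proof
    assume "\<forall>a\<in>S. \<forall>b\<in>S. a = b"
    then obtain a where "S = {a}" using Sne by blast
    then show "card S = 1" by simp
  next
    assume "card S = 1"
    then obtain a where "S = {a}" by (auto simp: card_1_singleton_iff)
    then show "\<forall>a\<in>S. \<forall>b\<in>S. a = b" by simp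
  qed
  finally show ?thesis unfolding row_degree_def S_def .
qed

lemma deg12_iff:
  assumes PG: "P \<in> Gamma_pi m n" and i: "i \<in> {1..m}" and mid: "i = m+1-i"
  shows "(\<forall>j1\<in>{1..n}. \<forall>j2\<in>{1..n}. P i j1 \<noteq> 0 \<longrightarrow> P i j2 \<noteq> 0 \<longrightarrow> j1 \<noteq> j2 \<longrightarrow> j2 = n+1-j1)
         \<longleftrightarrow> row_degree n P i \<in> {1, 2}"
proof -
  define S where "S = {j\<in>{1..n}. P i j \<noteq> 0}"
  have Sne: "S \<noteq> {}" using row_nonempty[OF PG i] unfolding S_def by auto
  have fin: "finite S" unfolding S_def by auto
  have Ssym: "n+1-a \<in> S" if "a \<in> S" for a
  proof -
    have a: "a \<in> {1..n}" "P i a \<noteq> 0" using that unfolding S_def by auto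
    have "P i (n+1-a) = P i a" using GammaD(4)[OF PG i a(1)] mid by simp
    then show ?thesis using a unfolding S_def by auto
  qed
  have Sn: "a \<in> {1..n}" if "a \<in> S" for a using that unfolding S_def by auto
  have "(\<forall>j1\<in>{1..n}. \<forall>j2\<in>{1..n}. P i j1 \<noteq> 0 \<longrightarrow> P i j2 \<noteq> 0 \<longrightarrow> j1 \<noteq> j2 \<longrightarrow> j2 = n+1-j1)
        \<longleftrightarrow> (\<forall>a\<in>S. \<forall>b\<in>S. a \<noteq> b \<longrightarrow> b = n+1-a)" unfolding S_def by auto
  also have "\<dots> \<longleftrightarrow> card S \<in> {1, 2}"
  proof
    assume H: "\<forall>a\<in>S. \<forall>b\<in>S. a \<noteq> b \<longrightarrow> b = n+1-a"
    obtain a where a: "a \<in> S" using Sne by auto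
    have "S \<subseteq> {a, n+1-a}"
    proof
      fix x assume x: "x \<in> S"
      show "x \<in> {a, n+1-a}"
      proof (cases "x = a")
        case False
        then have "x = n+1-a" using H[rule_format, OF a x] by auto
        then show ?thesis by simp
      qed simp
    qed
    then have "card S \<le> card {a, n+1-a}" by (rule card_mono[rotated]) simp
    also have "\<dots> \<le> 2" by (simp add: card_insert_if)
    finally have "card S \<le> 2" .
    moreover have "card S \<noteq> 0" using fin Sne by simp
    ultimately show "card S \<in> {1, 2}" by auto
  next
    assume c: "card S \<in> {1, 2}"
    show "\<forall>a\<in>S. \<forall>b\<in>S. a \<noteq> b \<longrightarrow> b = n+1-a"
    proof (cases "card S = 1")
      case True
      then obtain a where "S = {a}" by (auto simp: card_1_singleton_iff)
      then show ?thesis by simp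
    next
      case False
      then have "card S = 2" using c by auto
      then obtain a b where ab: "S = {a, b}" "a \<noteq> b" by (auto simp: card_2_iff)
      have "n+1-a \<in> {a,b}" "n+1-b \<in> {a,b}" using Ssym ab by auto
      moreover have "a \<in> {1..n}" "b \<in> {1..n}" using Sn ab by auto
      ultimately have "b = n+1-a" "a = n+1-b" using ab(2) by auto
      then show ?thesis using ab by auto
    qed
  qed
  finally show ?thesis unfolding row_degree_def S_def .
qed

theorem mainTheorem12:
  fixes m n :: nat and P :: "nat \<Rightarrow> nat \<Rightarrow> real"
  assumes "0 < m" and "0 < n" and "P \<in> Gamma_pi m n"
  shows "(even m \<longrightarrow>
            (extreme_mat P (Gamma_pi m n) \<longleftrightarrow>
               is_forest (bip_adj m n P) \<and> (\<forall>i\<in>{1..m}. row_degree n P i = 1)))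
       \<and> (\<forall>k. m = 2 * k + 1 \<longrightarrow>
            (extreme_mat P (Gamma_pi m n) \<longleftrightarrow>
               is_forest (bip_adj m n P)
               \<and> row_degree n P (k + 1) \<in> {1, 2}
               \<and> (\<forall>i\<in>{1..m}. i \<noteq> k + 1 \<longrightarrow> row_degree n P i = 1)))"
proof (intro conjI impI allI)
  note PG = assms(3)
  assume ev: "even m"
  have nm: "i \<noteq> m+1-i" if "i \<in> {1..m}" for i
  proof
    assume "i = m+1-i"
    then have "m + 1 = 2*i" using that by auto
    then show False using ev by presburger
  qed
  have "extreme_mat P (Gamma_pi m n) \<longleftrightarrow> rcond m n P" by (rule extreme_iff_cond[OF PG])
  also have "\<dots> \<longleftrightarrow> (\<forall>i\<in>{1..m}. row_degree n P i = 1)"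
  proof -
    have "rcond m n P \<longleftrightarrow> (\<forall>i\<in>{1..m}. (\<forall>j1\<in>{1..n}. \<forall>j2\<in>{1..n}. P i j1 \<noteq> 0 \<longrightarrow> P i j2 \<noteq> 0 \<longrightarrow> j1 = j2))"
      unfolding rcond_def
    proof
      assume H: "\<forall>i\<in>{1..m}. \<forall>j1\<in>{1..n}. \<forall>j2\<in>{1..n}. P i j1 \<noteq> 0 \<longrightarrow> P i j2 \<noteq> 0 \<longrightarrow> j1 \<noteq> j2 \<longrightarrow> i = m + 1 - i \<and> j2 = n + 1 - j1"
      show "\<forall>i\<in>{1..m}. (\<forall>j1\<in>{1..n}. \<forall>j2\<in>{1..n}. P i j1 \<noteq> 0 \<longrightarrow> P i j2 \<noteq> 0 \<longrightarrow> j1 = j2)"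
      proof (intro ballI impI)
        fix i j1 j2 assume i: "i \<in> {1..m}" and j: "j1 \<in> {1..n}" "j2 \<in> {1..n}" and pj: "P i j1 \<noteq> 0" "P i j2 \<noteq> 0"
        show "j1 = j2"
        proof (rule ccontr)
          assume "j1 \<noteq> j2"
          then have "i = m+1-i" using H[rule_format, OF i j pj] by simp
          then show False using nm[OF i] by simp
        qed
      qed
    next
      assume H: "\<forall>i\<in>{1..m}. (\<forall>j1\<in>{1..n}. \<forall>j2\<in>{1..n}. P i j1 \<noteq> 0 \<longrightarrow> P i j2 \<noteq> 0 \<longrightarrow> j1 = j2)"
      show "\<forall>i\<in>{1..m}. \<forall>j1\<in>{1..n}. \<forall>j2\<in>{1..n}. P i j1 \<noteq> 0 \<longrightarrow> P i j2 \<noteq> 0 \<longrightarrow> j1 \<noteq> j2 \<longrightarrow> i = m + 1 - i \<and> j2 = n + 1 - j1"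
      proof (intro ballI impI)
        fix i j1 j2 assume i: "i \<in> {1..m}" and j: "j1 \<in> {1..n}" "j2 \<in> {1..n}" and pj: "P i j1 \<noteq> 0" "P i j2 \<noteq> 0" and ne: "j1 \<noteq> j2"
        show "i = m + 1 - i \<and> j2 = n + 1 - j1" using H[rule_format, OF i j pj] ne by simp
      qed
    qed
    moreover have "(\<forall>i\<in>{1..m}. (\<forall>j1\<in>{1..n}. \<forall>j2\<in>{1..n}. P i j1 \<noteq> 0 \<longrightarrow> P i j2 \<noteq> 0 \<longrightarrow> j1 = j2))
       \<longleftrightarrow> (\<forall>i\<in>{1..m}. row_degree n P i = 1)"
      using deg1_iff[OF PG] by (intro ball_cong) auto
    ultimately show ?thesis by simp
  qed
  also have "\<dots> \<longleftrightarrow> is_forest (bip_adj m n P) \<and> (\<forall>i\<in>{1..m}. row_degree n P i = 1)"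
  proof -
    have "(\<forall>i\<in>{1..m}. row_degree n P i = 1) \<Longrightarrow> is_forest (bip_adj m n P)"
      by (rule forest_lemma[of m 0 n P]) auto
    then show ?thesis by blast
  qed
  finally show "extreme_mat P (Gamma_pi m n) \<longleftrightarrow> is_forest (bip_adj m n P) \<and> (\<forall>i\<in>{1..m}. row_degree n P i = 1)" .
next
  note PG = assms(3)
  fix k assume mk: "m = 2 * k + 1"
  have mid: "i = m+1-i \<longleftrightarrow> i = k+1" if "i \<in> {1..m}" for i using that mk by auto
  have k1: "k+1 \<in> {1..m}" using mk by auto
  have "extreme_mat P (Gamma_pi m n) \<longleftrightarrow> rcond m n P" by (rule extreme_iff_cond[OF PG])
  also have "\<dots> \<longleftrightarrow> row_degree n P (k + 1) \<in> {1, 2}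
               \<and> (\<forall>i\<in>{1..m}. i \<noteq> k + 1 \<longrightarrow> row_degree n P i = 1)"
  proof -
    have "rcond m n P \<longleftrightarrow>
      (\<forall>j1\<in>{1..n}. \<forall>j2\<in>{1..n}. P (k+1) j1 \<noteq> 0 \<longrightarrow> P (k+1) j2 \<noteq> 0 \<longrightarrow> j1 \<noteq> j2 \<longrightarrow> j2 = n+1-j1)
      \<and> (\<forall>i\<in>{1..m}. i \<noteq> k + 1 \<longrightarrow> (\<forall>j1\<in>{1..n}. \<forall>j2\<in>{1..n}. P i j1 \<noteq> 0 \<longrightarrow> P i j2 \<noteq> 0 \<longrightarrow> j1 = j2))"
      unfolding rcond_def
    proof
      assume H: "\<forall>i\<in>{1..m}. \<forall>j1\<in>{1..n}. \<forall>j2\<in>{1..n}. P i j1 \<noteq> 0 \<longrightarrow> P i j2 \<noteq> 0 \<longrightarrow> j1 \<noteq> j2 \<longrightarrow> i = m + 1 - i \<and> j2 = n + 1 - j1"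
      have A: "\<forall>j1\<in>{1..n}. \<forall>j2\<in>{1..n}. P (k+1) j1 \<noteq> 0 \<longrightarrow> P (k+1) j2 \<noteq> 0 \<longrightarrow> j1 \<noteq> j2 \<longrightarrow> j2 = n+1-j1"
        using H[rule_format, OF k1] by blast
      have B: "\<forall>i\<in>{1..m}. i \<noteq> k + 1 \<longrightarrow> (\<forall>j1\<in>{1..n}. \<forall>j2\<in>{1..n}. P i j1 \<noteq> 0 \<longrightarrow> P i j2 \<noteq> 0 \<longrightarrow> j1 = j2)"
      proof (intro ballI impI)
        fix i j1 j2 assume i: "i \<in> {1..m}" "i \<noteq> k+1" and j: "j1 \<in> {1..n}" "j2 \<in> {1..n}" and pj: "P i j1 \<noteq> 0" "P i j2 \<noteq> 0"
        show "j1 = j2"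
        proof (rule ccontr)
          assume "j1 \<noteq> j2"
          then have "i = m+1-i" using H[rule_format, OF i(1) j pj] by simp
          then show False using mid[OF i(1)] i(2) by blast
        qed
      qed
      show "(\<forall>j1\<in>{1..n}. \<forall>j2\<in>{1..n}. P (k+1) j1 \<noteq> 0 \<longrightarrow> P (k+1) j2 \<noteq> 0 \<longrightarrow> j1 \<noteq> j2 \<longrightarrow> j2 = n+1-j1)
      \<and> (\<forall>i\<in>{1..m}. i \<noteq> k + 1 \<longrightarrow> (\<forall>j1\<in>{1..n}. \<forall>j2\<in>{1..n}. P i j1 \<noteq> 0 \<longrightarrow> P i j2 \<noteq> 0 \<longrightarrow> j1 = j2))"
        using A B by blast
    next
      assume H: "(\<forall>j1\<in>{1..n}. \<forall>j2\<in>{1..n}. P (k+1) j1 \<noteq> 0 \<longrightarrow> P (k+1) j2 \<noteq> 0 \<longrightarrow> j1 \<noteq> j2 \<longrightarrow> j2 = n+1-j1)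
      \<and> (\<forall>i\<in>{1..m}. i \<noteq> k + 1 \<longrightarrow> (\<forall>j1\<in>{1..n}. \<forall>j2\<in>{1..n}. P i j1 \<noteq> 0 \<longrightarrow> P i j2 \<noteq> 0 \<longrightarrow> j1 = j2))"
      then have H1: "\<forall>j1\<in>{1..n}. \<forall>j2\<in>{1..n}. P (k+1) j1 \<noteq> 0 \<longrightarrow> P (k+1) j2 \<noteq> 0 \<longrightarrow> j1 \<noteq> j2 \<longrightarrow> j2 = n+1-j1"
        and H2: "\<forall>i\<in>{1..m}. i \<noteq> k + 1 \<longrightarrow> (\<forall>j1\<in>{1..n}. \<forall>j2\<in>{1..n}. P i j1 \<noteq> 0 \<longrightarrow> P i j2 \<noteq> 0 \<longrightarrow> j1 = j2)"
        by blast+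
      show "\<forall>i\<in>{1..m}. \<forall>j1\<in>{1..n}. \<forall>j2\<in>{1..n}. P i j1 \<noteq> 0 \<longrightarrow> P i j2 \<noteq> 0 \<longrightarrow> j1 \<noteq> j2 \<longrightarrow> i = m + 1 - i \<and> j2 = n + 1 - j1"
      proof (intro ballI impI)
        fix i j1 j2 assume i: "i \<in> {1..m}" and j: "j1 \<in> {1..n}" "j2 \<in> {1..n}" and pj: "P i j1 \<noteq> 0" "P i j2 \<noteq> 0" and ne: "j1 \<noteq> j2"
        have ik: "i = k+1" using H2[rule_format, OF i _ j pj] ne by blast
        show "i = m + 1 - i \<and> j2 = n + 1 - j1" using mid[OF i] ik H1[rule_format, OF j] pj ne by simp
      qed
    qed
    moreover have "(\<forall>i\<in>{1..m}. i \<noteq> k + 1 \<longrightarrow> (\<forall>j1\<in>{1..n}. \<forall>j2\<in>{1..n}. P i j1 \<noteq> 0 \<longrightarrow> P i j2 \<noteq> 0 \<longrightarrow> j1 = j2))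
       \<longleftrightarrow> (\<forall>i\<in>{1..m}. i \<noteq> k + 1 \<longrightarrow> row_degree n P i = 1)"
      using deg1_iff[OF PG] by (intro ball_cong) auto
    moreover have "k + 1 = m + 1 - (k + 1)" using mk by simp
    ultimately show ?thesis using deg12_iff[OF PG k1] by simp
  qed
  also have "\<dots> \<longleftrightarrow> is_forest (bip_adj m n P) \<and> row_degree n P (k + 1) \<in> {1, 2}
               \<and> (\<forall>i\<in>{1..m}. i \<noteq> k + 1 \<longrightarrow> row_degree n P i = 1)"
  proof -
    have "(\<forall>i\<in>{1..m}. i \<noteq> k + 1 \<longrightarrow> row_degree n P i = 1) \<Longrightarrow> is_forest (bip_adj m n P)"
      by (rule forest_lemma[of m "k+1" n P]) auto
    then show ?thesis by blast
  qed
  finally show "extreme_mat P (Gamma_pi m n) \<longleftrightarrow> is_forest (bip_adj m n P) \<and> row_degree n P (k + 1) \<in> {1, 2}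
               \<and> (\<forall>i\<in>{1..m}. i \<noteq> k + 1 \<longrightarrow> row_degree n P i = 1)" .
qed

end
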